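(* Let $S$ be a semigroup with a maximal $\mathcal{J}$-class $J$ (with respect to $\le_{\mathcal{J}}$) such that $\langle J\rangle\neq S$. Then $\sigma_s(S)=2$.
   Context: For a semigroup $S$, $S^1$ is $S$ with an identity adjoined if $S$ has none, and $S$ otherwise. $x\mathcal{J}y$ iff $S^1xS^1=S^1yS^1$; the classes are $\mathcal{J}$-classes, ordered by $J_x\le_{\mathcal{J}}J_y$ iff $S^1xS^1\subseteq S^1yS^1$. $\langle J\rangle$ is the subsemigroup generated by $J$. $\sigma_s(S)$ is the least positive integer $n$ such that $S$ is the union of $n$ proper subsemigroups, or $\infty$ if none exists. *)

theory Defs
  imports Main "HOL-Library.Extended_Nat"
begin

text \<open>A semigroup is modelled as a type of class semigroup_mult; S is UNIV.\<close>

definition subsemigroup :: "'a::semigroup_mult set \<Rightarrow> bool" where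
  "subsemigroup T \<longleftrightarrow> (\<forall>x\<in>T. \<forall>y\<in>T. x * y \<in> T)"

text \<open>Principal two-sided ideal S^1 x S^1.\<close>
definition princ_ideal :: "'a::semigroup_mult \<Rightarrow> 'a set" where
  "princ_ideal x = {u. u = x \<or> (\<exists>a. u = a * x) \<or> (\<exists>b. u = x * b) \<or> (\<exists>a b. u = a * x * b)}"

definition J_class :: "'a::semigroup_mult \<Rightarrow> 'a set" where
  "J_class x = {y. princ_ideal y = princ_ideal x}"

definition maximal_J_class :: "'a::semigroup_mult set \<Rightarrow> bool" where
  "maximal_J_class J \<longleftrightarrow> (\<exists>x. J = J_class x \<and>
      (\<forall>y. princ_ideal x \<subseteq> princ_ideal y \<longrightarrow> princ_ideal y \<subseteq> princ_ideal x))"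

definition generated :: "'a::semigroup_mult set \<Rightarrow> 'a set" where
  "generated A = \<Inter>{T. subsemigroup T \<and> A \<subseteq> T}"

definition covered_by :: "nat \<Rightarrow> 'a::semigroup_mult set \<Rightarrow> bool" where
  "covered_by n S \<longleftrightarrow> (\<exists>T :: nat \<Rightarrow> 'a set.
      (\<forall>i<n. subsemigroup (T i) \<and> T i \<subseteq> S \<and> T i \<noteq> S) \<and> (\<Union>i<n. T i) = S)"

definition sigma_s :: "'a::semigroup_mult set \<Rightarrow> enat" where
  "sigma_s S = (if \<exists>n>0. covered_by n S then enat (LEAST n. n > 0 \<and> covered_by n S) else \<infinity>)"

end

theory Submission
  imports Defs
begin

lemma pi_self: "x \<in> princ_ideal x" by (simp add: princ_ideal_def)

lemma pi_mult_right: "princ_ideal (x * y) \<subseteq> princ_ideal x"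
proof
  fix u assume "u \<in> princ_ideal (x * y)"
  then show "u \<in> princ_ideal x" unfolding princ_ideal_def
    by (auto simp: mult.assoc)
qed

lemma pi_mult_left: "princ_ideal (x * y) \<subseteq> princ_ideal y"
proof
  fix u assume "u \<in> princ_ideal (x * y)"
  then show "u \<in> princ_ideal y" unfolding princ_ideal_def
    by (auto simp: mult.assoc) (metis mult.assoc)+
qed

lemma gen_sub: "subsemigroup (generated A)"
  unfolding generated_def subsemigroup_def by auto

lemma gen_sup: "A \<subseteq> generated A"
  unfolding generated_def by auto

theorem mainTheorem7:
  fixes J :: "'a::semigroup_mult set"
  assumes "maximal_J_class J"
    and "generated J \<noteq> UNIV"
  shows "sigma_s (UNIV :: 'a set) = 2"
proof -
  obtain j where J: "J = J_class j" and mx: "\<And>y. princ_ideal j \<subseteq> princ_ideal y \<Longrightarrow> princ_ideal y \<subseteq> princ_ideal j"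
    using assms(1) unfolding maximal_J_class_def by blast
  have jJ: "j \<in> J" using J by (simp add: J_class_def)
  have compl: "subsemigroup (- J)"
    unfolding subsemigroup_def
  proof (intro ballI)
    fix x y assume x: "x \<in> - J" and y: "y \<in> - J"
    show "x * y \<in> - J"
    proof
      assume "x * y \<in> J"
      then have e: "princ_ideal (x*y) = princ_ideal j" using J by (simp add: J_class_def)
      then have "princ_ideal j \<subseteq> princ_ideal x" using pi_mult_right by metis
      then have "princ_ideal x = princ_ideal j" using mx by blast
      then have "x \<in> J" using J by (simp add: J_class_def)
      with x show False by simp
    qed
  qed
  define T where "T = (\<lambda>i::nat. if i = 0 then - J else generated J)"
  have c2: "covered_by 2 (UNIV::'a set)"
    unfolding covered_by_def
  proof (rule exI[of _ T], rule conjI, intro allI impI)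
    fix i :: nat assume "i < 2"
    show "subsemigroup (T i) \<and> T i \<subseteq> UNIV \<and> T i \<noteq> UNIV"
      using compl gen_sub assms(2) jJ by (auto simp: T_def)
  next
    have "(\<Union>i<2. T i) = T 0 \<union> T 1" by (auto simp: lessThan_Suc numeral_2_eq_2)
    also have "\<dots> = UNIV" using gen_sup[of J] by (auto simp: T_def)
    finally show "(\<Union>i<2. T i) = (UNIV::'a set)" .
  qed
  have n1: "\<not> covered_by 1 (UNIV::'a set)"
    unfolding covered_by_def by auto
  have L: "(LEAST n. n > 0 \<and> covered_by n (UNIV::'a set)) = 2"
  proof (rule Least_equality)
    show "0 < (2::nat) \<and> covered_by 2 (UNIV::'a set)" using c2 by simp
  next
    fix m assume "0 < m \<and> covered_by m (UNIV::'a set)"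
    then show "2 \<le> m" using n1 by (cases "m = 1") auto
  qed
  have "\<exists>n>0. covered_by n (UNIV::'a set)" using c2 by (intro exI[of _ 2]) simp
  then show ?thesis unfolding sigma_s_def using L
    by (simp add: numeral_eq_enat)
qed

end
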